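(* For every $k\ge0$, with $l=2^k$, $$f^{(2l-1)}(x,z)=x^{l}+\sum_{j=0}^{k}x^{\,l-2^j}z^{2^j}.$$
   Context: $\mathbb{F}=\mathrm{GF}(2)$, $R=\mathbb{F}[x,z]$, $|\cdot|$ is total degree. Let $(r_0,r_1,\ldots)$ be the binary sequence with $r_i=1$ if $i=2^j-1$ for some $j\ge 0$ and $r_i=0$ otherwise. For $n\ge1$ its inverse form is $R^{(1-n)}=\sum_{j=1-n}^{0}r_{-j}\,x^{j}z^{1-n-j}\in\mathbb{F}[x^{-1},z^{-1}]$. For a form $f\in R$ and such a form $G$, $\Delta(f;G)$ is the coefficient of $x^{|f|+|G|}z^0$ in $f\cdot G$ computed in $\mathbb{F}[x^{\pm1},z^{\pm1}]$ if $|f|+|G|\le 0$, and $0$ otherwise. Define forms recursively: $(f^{(0)},g^{(0)})=(x+z,z)$; for $k\ge0$ let $d_k=|g^{(k)}|-|f^{(k)}|$ and $\Delta_k=\Delta(f^{(k)};R^{(-1-k)})$, and set $(f^{(k+1)},g^{(k+1)})=(f^{(k)},zg^{(k)})$ if $\Delta_k=0$; $=(f^{(k)}+x^{-d_k}g^{(k)},\,zg^{(k)})$ if $\Delta_k=1$ and $d_k\le0$; $=(x^{d_k}f^{(k)}+g^{(k)},\,zf^{(k)})$ if $\Delta_k=1$ and $d_k>0$. *)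

theory Defs
  imports "HOL-Library.Poly_Mapping" "HOL-Library.Z2" "HOL-Library.Product_Plus"
begin

text \<open>Laurent polynomials over GF(2) in the variables x, z: finitely supported maps
  from exponent pairs (i, j) (standing for x^i z^j) to GF(2) = bit.
  The polynomial ring R = F[x,z] is the subring of those with nonnegative exponents.\<close>

type_synonym lpoly = "(int \<times> int) \<Rightarrow>\<^sub>0 bit"

definition mon :: "int \<Rightarrow> int \<Rightarrow> lpoly" where
  "mon i j = Poly_Mapping.single (i, j) 1"

abbreviation X :: lpoly where "X \<equiv> mon 1 0"
abbreviation Z :: lpoly where "Z \<equiv> mon 0 1"

definition tdeg :: "lpoly \<Rightarrow> int" where
  "tdeg p = (if p = 0 then 0 else Max ((\<lambda>(i, j). i + j) ` Poly_Mapping.keys p))"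

definition rseq :: "nat \<Rightarrow> bit" where
  "rseq i = (if \<exists>j. i = 2 ^ j - 1 then 1 else 0)"

text \<open>The inverse form R^(1-n) = sum_{j=1-n}^0 r_{-j} x^j z^{1-n-j}.\<close>
definition Rinv :: "nat \<Rightarrow> lpoly" where
  "Rinv n = (\<Sum>j\<in>{1 - int n..0}. Poly_Mapping.single (j, 1 - int n - j) (rseq (nat (- j))))"

definition Delta :: "lpoly \<Rightarrow> lpoly \<Rightarrow> bit" where
  "Delta f G = (if tdeg f + tdeg G \<le> 0 then Poly_Mapping.lookup (f * G) (tdeg f + tdeg G, 0) else 0)"

fun fg :: "nat \<Rightarrow> lpoly \<times> lpoly" where
  "fg 0 = (X + Z, Z)"
| "fg (Suc k) =
    (let (f, g) = fg k;
         d = tdeg g - tdeg f;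
         D = Delta f (Rinv (k + 2))
     in if D = 0 then (f, Z * g)
        else if d \<le> 0 then (f + mon (- d) 0 * g, Z * g)
        else (mon d 0 * f + g, Z * f))"

end

theory Submission
  imports Defs "HOL-Computational_Algebra.Formal_Power_Series"
begin

unbundle fps_syntax


lemma lookup_single_mult:
  "Poly_Mapping.lookup (Poly_Mapping.single k c * p) (x::int\<times>int) = c * Poly_Mapping.lookup p (x - k)"
  apply (simp add: lookup_mult lookup_single when_mult mult_when)
  by (smt (verit, ccfv_SIG) Sum_any.cong Sum_any.delta add_diff_cancel_left'
    add_diff_eq when_simps(1,2))

lemma lookup_mon_mult: "Poly_Mapping.lookup (mon a b * p) (i,j) = Poly_Mapping.lookup p (i-a, j-b)"
  by (simp add: mon_def lookup_single_mult)

lemma lookup_mon: "Poly_Mapping.lookup (mon a b) (i,j) = (if i = a \<and> j = b then 1 else 0)"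
  by (auto simp: mon_def lookup_single when_def)

lemma mon_mult: "mon a b * mon c d = mon (a+c) (b+d)"
  by (simp add: mon_def mult_single)

lemma bit_cases: "(x::bit) = 0 \<or> x = 1"
  using bit_not_zero_iff by blast

lemma bit_add_self[simp]: "(x::bit) + x = 0"
  using bit_cases[of x] by auto

lemma bit_mult_self[simp]: "(x::bit) * x = x"
  using bit_cases[of x] by auto

lemma one_mon: "(1::lpoly) = mon 0 0"
  by (simp add: mon_def flip: zero_prod_def)

lemma lp_two[simp]: "(2::lpoly) = 0"
proof -
  have "(2::lpoly) = Poly_Mapping.single 0 2" by (rule single_numeral[symmetric])
  also have "\<dots> = 0" by (simp only: bit_2_eq_0 single_zero)
  finally show ?thesis .
qed

lemma lp_add_self[simp]: "(p::lpoly) + p = 0"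
  by (metis lp_two mult_2 mult_zero_left)

lemma lp_sq_add: "((p::lpoly) + q)^2 = p^2 + q^2"
proof -
  have "(p+q)^2 = p^2 + q^2 + 2*(p*q)" by (simp add: power2_eq_square algebra_simps)
  then show ?thesis by simp
qed

lemma lp_sq_sum: "finite A \<Longrightarrow> ((\<Sum>i\<in>A. f i)::lpoly)^2 = (\<Sum>i\<in>A. (f i)^2)"
  by (induction A rule: finite_induct) (simp_all add: lp_sq_add)

lemma X_pow: "X ^ n = mon (int n) 0"
proof (induction n)
  case 0 then show ?case by (simp add: one_mon)
next
  case (Suc n) then show ?case by (simp add: mon_mult)
qed

lemma mon_sq: "(mon a b)^2 = mon (2*a) (2*b)"
  by (simp add: power2_eq_square mon_mult)




lemma bfps_add_self[simp]: "(f::bit fps) + f = 0"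
  by (rule fps_ext) (simp only: fps_add_nth bit_add_self fps_zero_nth)

lemma bfps_two[simp]: "(2::bit fps) = 0"
  by (metis bfps_add_self one_add_one)

lemma bfps_minus: "- (f::bit fps) = f"
  by (metis add_eq_0_iff bfps_add_self)

lemma bfps_diff: "(f::bit fps) - g = f + g"
  by (metis bfps_minus diff_conv_add_uminus)

lemma frob: "((f::bit fps) * f) $ n = (if even n then f $ (n div 2) else 0)"
proof -
  define g where "g i = f$i * f$(n-i)" for i
  define A where "A = {i\<in>{0..n}. 2*i < n}"
  define M where "M = {i\<in>{0..n}. 2*i = n}"
  define B where "B = {i\<in>{0..n}. 2*i > n}"
  have fin: "finite A" "finite M" "finite B" by (auto simp: A_def M_def B_def)
  have split: "{0..n} = A \<union> (M \<union> B)" by (auto simp: A_def M_def B_def)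
  have "(f*f) $ n = sum g {0..n}" by (simp add: fps_mult_nth g_def)
  also have "\<dots> = sum g A + (sum g M + sum g B)"
    unfolding split using fin
    by (simp add: sum.union_disjoint A_def M_def B_def disjoint_iff)
  also have "sum g B = sum g A"
  proof (rule sum.reindex_bij_witness[where i="\<lambda>i. n - i" and j="\<lambda>i. n - i"])
    show "\<And>a. a \<in> A \<Longrightarrow> n - (n - a) = a" by (auto simp: A_def)
    show "\<And>a. a \<in> A \<Longrightarrow> n - a \<in> B" by (auto simp: A_def B_def)
    show "\<And>b. b \<in> B \<Longrightarrow> n - (n - b) = b" by (auto simp: B_def)
    show "\<And>b. b \<in> B \<Longrightarrow> n - b \<in> A" by (auto simp: A_def B_def)
    show "\<And>b. b \<in> B \<Longrightarrow> g (n - b) = g b" by (auto simp: B_def g_def mult.commute)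
  qed
  also have "sum g A + (sum g M + sum g A) = sum g M + (sum g A + sum g A)"
    by (simp only: ac_simps)
  also have "\<dots> = sum g M" by (simp only: bit_add_self add_0_right)
  also have "sum g M = (if even n then f $ (n div 2) else 0)"
  proof (cases "even n")
    case True
    then have "M = {n div 2}" by (auto simp: M_def)
    moreover have "n - n div 2 = n div 2" using True by auto
    ultimately show ?thesis using True by (simp add: g_def)
  next
    case False
    then have "M = {}" by (auto simp: M_def)
    then show ?thesis using False by simp
  qed
  finally show ?thesis .
qed

definition u :: "bit fps" where "u = Abs_fps (\<lambda>n. if \<exists>j. n = 2^j then 1 else 0)"

lemma u_nth: "u $ n = (if \<exists>j. n = 2^j then 1 else 0)"
  by (simp add: u_def)

lemma u_sq: "u * u = u + fps_X"
proof (rule fps_ext)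
  fix n
  show "(u*u) $ n = (u + fps_X) $ n"
  proof (cases "even n")
    case True
    have iff: "(\<exists>j. n div 2 = 2^j) \<longleftrightarrow> (\<exists>j. n = 2^j)"
    proof
      assume "\<exists>j. n div 2 = 2^j"
      then obtain j where "n div 2 = 2^j" by blast
      then have "n = 2^(Suc j)" using True by auto
      then show "\<exists>j. n = 2^j" by blast
    next
      assume "\<exists>j. n = 2^j"
      then obtain j where j: "n = 2^j" by blast
      have "n \<noteq> 1" using True by auto
      then obtain i where "j = Suc i" using j by (cases j) auto
      then have "n div 2 = 2^i" using j by simp
      then show "\<exists>j. n div 2 = 2^j" by blast
    qed
    have n1: "n \<noteq> 1" using True by auto
    have L: "(u*u)$n = (if \<exists>j. n div 2 = 2^j then 1 else 0)"
      using True by (simp add: frob u_nth)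
    have R: "(u+fps_X)$n = (if \<exists>j. n = 2^j then 1 else 0)"
      using n1 by (simp add: u_nth)
    show ?thesis unfolding L R iff ..
  next
    case False
    have L: "(u*u)$n = 0" using False by (simp add: frob)
    show ?thesis
    proof (cases "n = 1")
      case True
      have "u $ 1 = 1" unfolding u_nth by (metis power_0)
      then show ?thesis using True L by simp
    next
      case n1: False
      have "\<not> (\<exists>j. n = 2^j)"
      proof
        assume "\<exists>j. n = 2^j"
        then obtain j where j: "n = 2^j" by blast
        show False proof (cases j)
          case 0 then show ?thesis using j n1 by simp
        next
          case (Suc i) then show ?thesis using j False by simp
        qed
      qed
      then have "u $ n = 0" unfolding u_nth by simp
      then show ?thesis using n1 L by simp
    qed
  qed
qed




fun P :: "nat \<Rightarrow> bit fps" where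
  "P 0 = 1"
| "P (Suc 0) = 1 + fps_X"
| "P (Suc (Suc n)) = P (Suc n) + fps_X^2 * P n"

fun Q :: "nat \<Rightarrow> bit fps" where
  "Q 0 = 0"
| "Q (Suc 0) = fps_X"
| "Q (Suc (Suc n)) = Q (Suc n) + fps_X^2 * Q n"

lemma Q_high: "2 * n \<le> i \<Longrightarrow> Q n $ i = 0"
proof (induction n arbitrary: i rule: Q.induct)
  case 1 then show ?case by simp
next
  case 2 then show ?case by simp
next
  case (3 n)
  have a: "Q (Suc n) $ i = 0" using 3 by simp
  have b: "(fps_X^2 * Q n) $ i = 0"
    using 3 by (simp add: fps_X_power_mult_nth)
  show ?case using a b by simp
qed

definition lam :: "bit fps" where "lam = u + fps_X"

lemma lam_sq: "lam^2 = lam + fps_X^2"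
proof -
  have "lam^2 = u*u + fps_X^2 + 2 * (u * fps_X)"
    by (simp add: lam_def power2_eq_square algebra_simps)
  also have "\<dots> = lam + fps_X^2" by (simp add: u_sq lam_def)
  finally show ?thesis .
qed

lemma E: "P n * u = Q n + lam^n * u"
proof (induction n rule: P.induct)
  case 1 then show ?case by simp
next
  case 2
  have "lam * u = u * u + fps_X * u" by (simp add: lam_def algebra_simps)
  also have "\<dots> = fps_X + (1 + fps_X) * u"
    by (simp add: u_sq algebra_simps)
  finally show ?case by simp
next
  case (3 n)
  have "P (Suc (Suc n)) * u = P (Suc n) * u + fps_X^2 * (P n * u)"
    by (simp add: algebra_simps)
  also have "\<dots> = Q (Suc (Suc n)) + lam^n * u * (lam + fps_X^2)"
    using 3 by (simp add: algebra_simps)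
  also have "\<dots> = Q (Suc (Suc n)) + lam^n * lam^2 * u"
    by (simp add: lam_sq mult_ac)
  also have "lam^n * lam^2 = lam^(Suc (Suc n))"
    by (simp add: power_add[symmetric])
  finally show ?case .
qed

lemma shift2: "(f::bit fps) $ 0 = 0 \<Longrightarrow> f $ 1 = 0 \<Longrightarrow> f = fps_X^2 * Abs_fps (\<lambda>n. f $ (n+2))"
proof (rule fps_ext)
  fix n assume a: "f $ 0 = 0" "f $ 1 = 0"
  show "f $ n = (fps_X^2 * Abs_fps (\<lambda>n. f $ (n+2))) $ n"
  proof (cases "n < 2")
    case True then have "n = 0 \<or> n = 1" by auto
    then show ?thesis using a by (auto simp: fps_X_power_mult_nth)
  next
    case False
    then have "Suc (Suc (n - 2)) = n" by simp
    then show ?thesis using False by (simp add: fps_X_power_mult_nth)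
  qed
qed

lemma shift1: "(f::bit fps) $ 0 = 0 \<Longrightarrow> f = fps_X * Abs_fps (\<lambda>n. f $ (n+1))"
proof (rule fps_ext)
  fix n assume a: "f $ 0 = 0"
  show "f $ n = (fps_X * Abs_fps (\<lambda>n. f $ (n+1))) $ n"
    using a by (cases n) (simp only: fps_X_mult_nth, simp)+
qed

lemma lampow_u: "(lam^n * u) $ (2*n) = 0 \<and> (lam^n * u) $ (2*n+1) = 1"
proof -
  define w where "w = Abs_fps (\<lambda>k. lam $ (k+2))"
  define v where "v = Abs_fps (\<lambda>k. u $ (k+1))"
  have u1: "u $ 1 = 1" unfolding u_nth by (metis power_0)
  have u2: "u $ 2 = 1" unfolding u_nth by (metis power_one_right)
  have "\<exists>j. Suc 0 = (2::nat)^j" by (rule exI[of _ 0]) simp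
  then have u1': "u $ Suc 0 = 1" unfolding u_nth by simp
  have u2': "u $ Suc (Suc 0) = 1" using u2 by (simp add: numeral_2_eq_2)
  have u0: "u $ 0 = 0" unfolding u_nth by simp
  have lw: "lam = fps_X^2 * w" unfolding w_def
    by (rule shift2) (simp_all add: lam_def u0 u1 u1')
  have uv: "u = fps_X * v" unfolding v_def by (rule shift1) (simp add: u0)
  have xx: "((fps_X::bit fps)^2)^n = fps_X^(2*n)" by (simp add: power_mult)
  have "lam^n * u = (fps_X^2)^n * w^n * (fps_X * v)"
    by (simp add: lw uv power_mult_distrib)
  also have "\<dots> = fps_X^(2*n+1) * (w^n * v)"
    unfolding xx by (simp add: algebra_simps)
  finally have "lam^n * u = fps_X^(2*n+1) * (w^n * v)" .
  moreover have w0: "w $ 0 = 1" by (simp add: w_def lam_def u2')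
  moreover have v0: "v $ 0 = 1" by (simp add: v_def u1')
  moreover have "(fps_X^(2*n+1) * (w^n * v)) $ (2*n) = 0"
    by (simp only: fps_X_power_mult_nth) simp
  moreover have "(fps_X^(2*n+1) * (w^n * v)) $ (2*n+1) = 1"
    by (simp only: fps_X_power_mult_nth) (simp add: fps_power_zeroth w0 v0)
  ultimately show ?thesis by simp
qed

lemma Pu: "(P n * u) $ (2*n) = 0" "(P n * u) $ (2*n+1) = 1"
  using lampow_u[of n] Q_high[of n "2*n"] Q_high[of n "2*n+1"] by (simp_all add: E)




fun Fp :: "nat \<Rightarrow> lpoly" where
  "Fp 0 = 1"
| "Fp (Suc 0) = X + Z"
| "Fp (Suc (Suc n)) = X * Fp (Suc n) + Z * Z * Fp n"

lemma lookup_one: "Poly_Mapping.lookup (1::lpoly) (i,j) = (if i = 0 \<and> j = 0 then 1 else 0)"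
  by (simp add: one_mon lookup_mon)

lemma ZZ: "Z * Z = mon 0 2"
  by (simp add: mon_mult)

lemma Fp_P: "Poly_Mapping.lookup (Fp n) (i,j) =
   (if j < 0 \<or> i + j \<noteq> int n then 0 else P n $ nat j)"
proof (induction n arbitrary: i j rule: Fp.induct)
  case 1
  show ?case by (auto simp: lookup_one)
next
  case 2
  show ?case
    by (auto simp: lookup_add lookup_mon nat_eq_iff)
next
  case (3 n)
  have "Poly_Mapping.lookup (Fp (Suc (Suc n))) (i,j) =
        Poly_Mapping.lookup (Fp (Suc n)) (i-1, j) + Poly_Mapping.lookup (Fp n) (i, j-2)"
    by (simp add: lookup_add ZZ lookup_mon_mult)
  also have "\<dots> = (if j < 0 \<or> i + j \<noteq> int (Suc (Suc n)) then 0 else P (Suc (Suc n)) $ nat j)"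
  proof (cases "j < 0 \<or> i + j \<noteq> int (Suc (Suc n))")
    case True then show ?thesis by (auto simp: 3)
  next
    case False
    then have j: "0 \<le> j" "i + j = int n + 2" by auto
    show ?thesis
    proof (cases "j < 2")
      case True
      then show ?thesis using j by (simp add: 3 fps_X_power_mult_nth)
    next
      case False
      then have "nat (j - 2) = nat j - 2" "\<not> nat j < 2" by auto
      then show ?thesis using j False by (simp add: 3 fps_X_power_mult_nth)
    qed
  qed
  finally show ?case .
qed

lemma P0: "P n $ 0 = 1"
  by (induction n rule: P.induct) (simp_all add: fps_X_power_mult_nth)

lemma tdeg_hom:
  assumes "\<And>i j. Poly_Mapping.lookup p (i,j) \<noteq> 0 \<Longrightarrow> i + j = d"
    and "Poly_Mapping.lookup p k \<noteq> 0"
  shows "tdeg p = d"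
proof -
  have p0: "p \<noteq> 0" using assms(2) by auto
  have "(\<lambda>(i, j). i + j) ` Poly_Mapping.keys p = {d}"
  proof
    show "(\<lambda>(i, j). i + j) ` Poly_Mapping.keys p \<subseteq> {d}"
      using assms(1) by (auto simp: in_keys_iff)
    show "{d} \<subseteq> (\<lambda>(i, j). i + j) ` Poly_Mapping.keys p"
      using assms by (cases k) (force simp: in_keys_iff)
  qed
  then show ?thesis using p0 by (simp add: tdeg_def)
qed

lemma tdeg_Fp: "tdeg (Fp n) = int n"
  by (rule tdeg_hom[where k="(int n, 0)"]) (auto simp: Fp_P P0 split: if_splits)

lemma tdeg_ZZFp: "tdeg (Z * (Z * Fp n)) = int n + 2"
  by (rule tdeg_hom[where k="(int n, 2)"]) (auto simp: Fp_P P0 lookup_mon_mult split: if_splits)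

lemma lookup_Rinv: "Poly_Mapping.lookup (Rinv N) (i,j) =
   (if 1 - int N \<le> i \<and> i \<le> 0 \<and> i + j = 1 - int N then rseq (nat (- i)) else 0)"
proof -
  have "Poly_Mapping.lookup (Rinv N) (i,j) =
      (\<Sum>j'\<in>{1 - int N..0}. (if j' = i \<and> i + j = 1 - int N then rseq (nat (- j')) else 0))"
    unfolding Rinv_def lookup_sum
    by (rule sum.cong) (auto simp: lookup_single when_def)
  also have "\<dots> = (if 1 - int N \<le> i \<and> i \<le> 0 \<and> i + j = 1 - int N then rseq (nat (- i)) else 0)"
    by (auto simp: sum.delta)
  finally show ?thesis .
qed

lemma rseq0: "rseq 0 = 1"
proof -
  have "\<exists>j. (0::nat) = 2 ^ j - 1" by (rule exI[of _ 0]) simp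
  then show ?thesis unfolding rseq_def by simp
qed

lemma tdeg_Rinv: "N \<ge> 1 \<Longrightarrow> tdeg (Rinv N) = 1 - int N"
  by (rule tdeg_hom[where k="(0, 1 - int N)"]) (auto simp: lookup_Rinv rseq0 split: if_splits)

lemma u_r: "k \<ge> 1 \<Longrightarrow> u $ k = rseq (k - 1)"
proof -
  assume k: "k \<ge> 1"
  have "(\<exists>j. k = 2^j) \<longleftrightarrow> (\<exists>j. k - 1 = 2^j - 1)"
  proof
    assume "\<exists>j. k = 2^j" then show "\<exists>j. k - 1 = 2^j - 1" by auto
  next
    assume "\<exists>j. k - 1 = 2^j - 1"
    then obtain j where "k - 1 = 2^j - 1" by blast
    moreover have "(2::nat)^j \<ge> 1" by simp
    ultimately have "k = 2^j" using k by linarith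
    then show "\<exists>j. k = 2^j" by blast
  qed
  then show ?thesis by (simp add: u_nth rseq_def)
qed

lemma conv: "(P n * u) $ N = (\<Sum>i\<in>{0..<N}. P n $ i * rseq (N - 1 - i))"
proof -
  have u0: "u $ 0 = 0" by (simp add: u_nth)
  have "(P n * u) $ N = (\<Sum>i\<in>{0..<Suc N}. P n $ i * u $ (N - i))"
    by (simp add: fps_mult_nth atLeastLessThanSuc_atLeastAtMost)
  also have "\<dots> = (\<Sum>i\<in>{0..<N}. P n $ i * u $ (N - i))"
    by (simp add: u0)
  also have "\<dots> = (\<Sum>i\<in>{0..<N}. P n $ i * rseq (N - 1 - i))"
    by (rule sum.cong) (auto simp: u_r)
  finally show ?thesis .
qed

lemma lookup_prod: "Poly_Mapping.lookup (Fp n * Rinv N) (int n + 1 - int N, 0) =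
   (\<Sum>i\<in>{0..<N}. P n $ i * rseq (N - 1 - i))"
proof -
  have "Poly_Mapping.lookup (Fp n * Rinv N) (int n + 1 - int N, 0) =
    (\<Sum>j\<in>{1 - int N..0}. Poly_Mapping.lookup
        (Poly_Mapping.single (j, 1 - int N - j) (rseq (nat (- j))) * Fp n) (int n + 1 - int N, 0))"
    unfolding Rinv_def sum_distrib_left lookup_sum by (simp add: mult.commute)
  also have "\<dots> = (\<Sum>j\<in>{1 - int N..0}. rseq (nat (- j)) * P n $ nat (j - (1 - int N)))"
    by (rule sum.cong) (auto simp: lookup_single_mult Fp_P)
  also have "\<dots> = (\<Sum>i\<in>{0..<N}. P n $ i * rseq (N - 1 - i))"
  proof (rule sum.reindex_bij_witness[where i="\<lambda>b. int b + 1 - int N" and j="\<lambda>a. nat (a + int N - 1)"])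
    fix a assume a: "a \<in> {1 - int N..0}"
    show "int (nat (a + int N - 1)) + 1 - int N = a" using a by auto
    show "nat (a + int N - 1) \<in> {0..<N}" using a by auto
    have "N - 1 - nat (a + int N - 1) = nat (- a)" using a by auto
    moreover have "nat (a + int N - 1) = nat (a - (1 - int N))" by (simp add: algebra_simps)
    ultimately show "P n $ nat (a + int N - 1) * rseq (N - 1 - nat (a + int N - 1)) =
        rseq (nat (- a)) * P n $ nat (a - (1 - int N))" by (simp add: mult.commute)
  next
    fix b assume b: "b \<in> {0..<N}"
    show "nat (int b + 1 - int N + int N - 1) = b" by simp
    show "int b + 1 - int N \<in> {1 - int N..0}" using b by auto
  qed
  finally show ?thesis .
qed

lemma Delta_Fp:
  assumes "N \<ge> 1" "int n + 1 - int N \<le> 0"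
  shows "Delta (Fp n) (Rinv N) = (P n * u) $ N"
proof -
  have t: "tdeg (Fp n) + tdeg (Rinv N) = int n + 1 - int N"
    using assms(1) by (simp add: tdeg_Fp tdeg_Rinv)
  show ?thesis unfolding Delta_def t
    by (simp only: assms if_True lookup_prod conv)
qed

lemma fg_even_step:
  assumes "fg (2*m) = (Fp (Suc m), Z * Fp m)"
  shows "fg (Suc (2*m)) = (Fp (Suc m), Z * (Z * Fp m))"
proof -
  have N: "2*m + 2 = 2 * Suc m" by simp
  have D: "Delta (Fp (Suc m)) (Rinv (2*m + 2)) = 0"
    unfolding N using Delta_Fp[of "2*Suc m" "Suc m"] Pu(1)[of "Suc m"] by simp
  show ?thesis using assms D by (simp add: Let_def)
qed

lemma fg_odd_step:
  assumes "fg (Suc (2*m)) = (Fp (Suc m), Z * (Z * Fp m))"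
  shows "fg (2 * Suc m) = (Fp (Suc (Suc m)), Z * Fp (Suc m))"
proof -
  have N: "Suc (2*m) + 2 = 2 * Suc m + 1" by simp
  have D: "Delta (Fp (Suc m)) (Rinv (Suc (2*m) + 2)) = 1"
    unfolding N using Delta_Fp[of "2*Suc m + 1" "Suc m"] Pu(2)[of "Suc m"] by simp
  have d: "tdeg (Z * (Z * Fp m)) - tdeg (Fp (Suc m)) = 1"
    by (simp add: tdeg_ZZFp tdeg_Fp)
  have "fg (Suc (Suc (2*m))) = (mon 1 0 * Fp (Suc m) + Z * (Z * Fp m), Z * Fp (Suc m))"
    using assms D d by (simp only: fg.simps Let_def case_prod_conv) simp
  moreover have "2 * Suc m = Suc (Suc (2*m))" by simp
  moreover have "Fp (Suc (Suc m)) = mon 1 0 * Fp (Suc m) + Z * (Z * Fp m)"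
    by (simp add: mult.assoc)
  ultimately show ?thesis by simp
qed

lemma fg_inv: "fg (2*m) = (Fp (Suc m), Z * Fp m) \<and> fg (Suc (2*m)) = (Fp (Suc m), Z * (Z * Fp m))"
proof (induction m)
  case 0
  have "fg (2*0) = (Fp (Suc 0), Z * Fp 0)" by simp
  then show ?case using fg_even_step[of 0] by blast
next
  case (Suc m)
  then have "fg (2*Suc m) = (Fp (Suc (Suc m)), Z * Fp (Suc m))"
    using fg_odd_step[of m] by blast
  then show ?case using fg_even_step[of "Suc m"] by blast
qed



fun U :: "nat \<Rightarrow> lpoly" where
  "U 0 = 0"
| "U (Suc 0) = 1"
| "U (Suc (Suc n)) = X * U (Suc n) + Z * Z * U n"

lemma Fp_U: "Fp n = U (Suc n) + Z * U n"
  by (induction n rule: Fp.induct) (simp_all add: algebra_simps)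

lemma U_double: "U (2*n) = X * (U n)^2 \<and> U (Suc (2*n)) = (U (Suc n))^2 + Z * Z * (U n)^2"
proof (induction n)
  case 0 then show ?case by simp
next
  case (Suc n)
  define a where "a = U (Suc n)"
  define b where "b = U n"
  have h1: "U (2*n) = X * b^2" and h2: "U (Suc (2*n)) = a^2 + Z*Z*b^2"
    using Suc by (simp_all add: a_def b_def)
  have e1: "U (2 * Suc n) = X * (a^2 + Z*Z*b^2) + Z*Z*(X*b^2)"
    using h1 h2 by simp
  have e1': "X * (a^2 + Z*Z*b^2) + Z*Z*(X*b^2) = X * a^2 + 2 * (X*Z*Z*b^2)"
    by (simp add: algebra_simps)
  have e2: "U (Suc (2 * Suc n)) = X * (X * a^2 + Z*Z*(X*b^2) + Z*Z*(X*b^2)) + Z*Z*(a^2 + Z*Z*b^2)"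
    using h1 h2 e1 by (simp add: algebra_simps)
  have e2': "X * (X * a^2 + Z*Z*(X*b^2) + Z*Z*(X*b^2)) + Z*Z*(a^2 + Z*Z*b^2)
     = (X * a + Z*Z*b)^2 + Z*Z*a^2 + 2 * (X*Z*Z*X*b^2) + 2 * (X*a*Z*Z*b)"
    by (simp add: algebra_simps power2_eq_square)
  have Un2: "U (Suc (Suc n)) = X * a + Z*Z*b" by (simp add: a_def b_def)
  show ?case
    using e1 e1' e2 e2' Un2 by (simp add: a_def)
qed

lemma U_pow2: "U (2^k) = X^(2^k - 1)"
proof (induction k)
  case 0 then show ?case by simp
next
  case (Suc k)
  have "U (2^Suc k) = X * (X^(2^k - 1))^2"
    using U_double[of "2^k"] Suc by simp
  also have "\<dots> = X^(1 + (2^k - 1) * 2)" by (simp add: power_mult power_add)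
  also have "1 + (2^k - 1) * 2 = (2::nat)^Suc k - 1"
  proof -
    have h: "(2::nat)^k \<ge> 1" by simp
    have "\<And>t::nat. t \<ge> 1 \<Longrightarrow> 1 + (t - 1) * 2 = 2 * t - 1" by arith
    from this[OF h] show ?thesis by (simp only: power_Suc)
  qed
  finally show ?case .
qed

definition C :: "nat \<Rightarrow> lpoly" where
  "C k = mon (2^k) 0 + (\<Sum>j\<in>{1..k}. mon (2^k - 2^j) (2^j))"

lemma U_C: "U (Suc (2^k)) = C k"
proof (induction k)
  case 0
  then show ?case by (simp add: C_def)
next
  case (Suc k)
  have "U (Suc (2^Suc k)) = (C k)^2 + Z * Z * (X^(2^k - 1))^2"
    using U_double[of "2^k"] Suc U_pow2[of k] by simp
  also have "(C k)^2 = mon (2^Suc k) 0 + (\<Sum>j\<in>{1..k}. mon (2^Suc k - 2^Suc j) (2^Suc j))"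
    unfolding C_def lp_sq_add lp_sq_sum[OF finite_atLeastAtMost] mon_sq
    by (simp add: algebra_simps)
  also have "Z * Z * (X^(2^k - 1))^2 = mon (2^Suc k - 2^1) (2^1)"
  proof -
    have "(X^(2^k - 1))^2 = mon (2 * int (2^k - 1)) 0"
      by (simp add: X_pow mon_sq)
    moreover have "2 * int (2^k - 1) = 2^Suc k - 2"
    proof -
      have "(2::nat)^k \<ge> 1" by simp
      then show ?thesis by (simp add: of_nat_diff)
    qed
    ultimately show ?thesis by (simp add: ZZ mon_mult)
  qed
  also have "mon (2^Suc k) 0 + (\<Sum>j\<in>{1..k}. mon (2^Suc k - 2^Suc j) (2^Suc j)) +
      mon (2^Suc k - 2^1) (2^1) = C (Suc k)"
  proof -
    have "(\<Sum>j\<in>{1..Suc k}. mon (2^Suc k - 2^j) (2^j)) =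
       mon (2^Suc k - 2^1) (2^1) + (\<Sum>j\<in>{Suc 1..Suc k}. mon (2^Suc k - 2^j) (2^j))"
      by (rule sum.atLeast_Suc_atMost) simp
    also have "(\<Sum>j\<in>{Suc 1..Suc k}. mon (2^Suc k - 2^j) (2^j)) =
       (\<Sum>j\<in>{1..k}. mon (2^Suc k - 2^Suc j) (2^Suc j))"
      by (rule sum.shift_bounds_cl_Suc_ivl)
    finally show ?thesis unfolding C_def by (simp add: algebra_simps)
  qed
  finally show ?case .
qed



theorem mainTheorem13:
  fixes k :: nat
  defines "l \<equiv> (2::nat) ^ k"
  shows "fst (fg (2 * l - 1)) =
           mon (int l) 0 + (\<Sum>j\<in>{0..k}. mon (int (l - 2 ^ j)) (int (2 ^ j)))"
proof -
  have l1: "l \<ge> 1" by (simp add: l_def)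
  have e: "2 * l - 1 = Suc (2 * (l - 1))" using l1 by simp
  have h: "fg (Suc (2 * (l - 1))) = (Fp (Suc (l - 1)), Z * (Z * Fp (l - 1)))"
    by (rule conjunct2[OF fg_inv])
  have "fst (fg (2 * l - 1)) = Fp (Suc (l - 1))" unfolding e h by (rule fst_conv)
  also have "Suc (l - 1) = 2^k" using l1 by (simp add: l_def)
  also have "Fp (2^k) = C k + mon (2^k - 1) 1"
  proof -
    have "Z * X^(2^k - 1) = mon (2^k - 1) 1"
    proof -
      have "int (2^k - 1) = 2^k - 1" by (simp add: of_nat_diff)
      then show ?thesis by (simp add: X_pow mon_mult)
    qed
    then show ?thesis by (simp add: Fp_U U_C U_pow2)
  qed
  also have "C k + mon (2^k - 1) 1 =
           mon (int l) 0 + (\<Sum>j\<in>{0..k}. mon (int (l - 2 ^ j)) (int (2 ^ j)))"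
  proof -
    have "(\<Sum>j\<in>{0..k}. mon (int (l - 2 ^ j)) (int (2 ^ j))) =
       mon (int (l - 2^0)) (int (2^0)) + (\<Sum>j\<in>{Suc 0..k}. mon (int (l - 2 ^ j)) (int (2 ^ j)))"
      by (rule sum.atLeast_Suc_atMost) simp
    also have "(\<Sum>j\<in>{Suc 0..k}. mon (int (l - 2 ^ j)) (int (2 ^ j))) =
        (\<Sum>j\<in>{1..k}. mon (2^k - 2^j) (2^j))"
    proof (rule sum.cong)
      show "{Suc 0..k} = {1..k}" by simp
    next
      fix j assume "j \<in> {1..k}"
      then have "(2::nat)^j \<le> 2^k" by (simp add: power_increasing)
      then show "mon (int (l - 2 ^ j)) (int (2 ^ j)) = mon (2^k - 2^j) (2^j)"
        by (simp add: l_def of_nat_diff)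
    qed
    also have "mon (int (l - 2^0)) (int (2^0)) = mon (2^k - 1) 1"
      using l1 by (simp add: l_def of_nat_diff)
    finally show ?thesis by (simp add: C_def l_def algebra_simps)
  qed
  finally show ?thesis .
qed


end
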